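(* Let $A$ and $\hat A$ be real $n\times n$ matrices, both in ordered real Schur form, and let $U$ be a real orthogonal matrix with $\hat AU=UA$. Let $m$ be the number of distinct complex conjugate pairs of non-real eigenvalues plus the number of distinct real eigenvalues of $A$. Partition $A$, $\hat A$ and $U$ conformally into $m\times m$ block form, where each diagonal block index corresponds to the maximal set of consecutive diagonal Schur blocks sharing the same eigenvalue(s). Then $U=U_1\oplus U_2\oplus\cdots\oplus U_m$ with each $U_i$ orthogonal.
   Context: A real matrix $A$ is in real Schur form if it is block upper triangular with diagonal blocks $Z_1,\dots,Z_M$ (in this order), where $Z_1,\dots,Z_\ell$ are $2\times 2$ real blocks each having a pair of non-real complex conjugate eigenvalues and $Z_{\ell+1},\dots,Z_M$ are $1\times1$ real blocks ($M=n-\ell$). Writing $\lambda^{(k)}$ for an eigenvalue of $Z_k$, $A$ is in ordered real Schur form if (1) $|\lambda^{(i)}|\le|\lambda^{(j)}|$ whenever $i<j\le\ell$ or $\ell<i<j\le M$, and (2) if in such a case $|\lambda^{(i)}|=|\lambda^{(j)}|$, then $\operatorname{Re}\lambda^{(j)}\le\operatorname{Re}\lambda^{(i)}$. (Under this ordering, diagonal blocks with equal eigenvalues are consecutive.) *)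

theory Defs
  imports Complex_Main "Jordan_Normal_Form.Matrix" "Jordan_Normal_Form.Char_Poly"
begin

definition real_orthogonal :: "nat \<Rightarrow> real mat \<Rightarrow> bool" where
  "real_orthogonal n U \<longleftrightarrow> U \<in> carrier_mat n n \<and> transpose_mat U * U = 1\<^sub>m n"

text \<open>A list bs of diagonal block sizes; the k-th block starts at row/column blk_start bs k.\<close>
definition blk_start :: "nat list \<Rightarrow> nat \<Rightarrow> nat" where
  "blk_start bs k = sum_list (take k bs)"

definition blk_of :: "nat list \<Rightarrow> nat \<Rightarrow> nat" where
  "blk_of bs i = (LEAST k. i < blk_start bs (Suc k))"

definition diag_blk :: "real mat \<Rightarrow> nat list \<Rightarrow> nat \<Rightarrow> real mat" where
  "diag_blk A bs k = mat (bs ! k) (bs ! k) (\<lambda>(i, j). A $$ (blk_start bs k + i, blk_start bs k + j))"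

definition blk_eigs :: "real mat \<Rightarrow> nat list \<Rightarrow> nat \<Rightarrow> complex set" where
  "blk_eigs A bs k = {z. eigenvalue (map_mat complex_of_real (diag_blk A bs k)) z}"

definition real_schur_form :: "real mat \<Rightarrow> nat list \<Rightarrow> nat \<Rightarrow> bool" where
  "real_schur_form A bs l \<longleftrightarrow>
     A \<in> carrier_mat (sum_list bs) (sum_list bs) \<and>
     l \<le> length bs \<and>
     bs = replicate l 2 @ replicate (length bs - l) 1 \<and>
     (\<forall>i < sum_list bs. \<forall>j < sum_list bs. blk_of bs j < blk_of bs i \<longrightarrow> A $$ (i, j) = 0) \<and>
     (\<forall>k < l. \<forall>z \<in> blk_eigs A bs k. Im z \<noteq> 0)"

definition ordered_real_schur_form :: "real mat \<Rightarrow> nat list \<Rightarrow> nat \<Rightarrow> bool" where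
  "ordered_real_schur_form A bs l \<longleftrightarrow>
     real_schur_form A bs l \<and>
     (\<forall>i j. i < j \<and> ((j < l) \<or> (l \<le> i \<and> j < length bs)) \<longrightarrow>
        (\<forall>z \<in> blk_eigs A bs i. \<forall>w \<in> blk_eigs A bs j.
            cmod z \<le> cmod w \<and> (cmod z = cmod w \<longrightarrow> Re w \<le> Re z)))"

text \<open>Merge maximal runs of consecutive blocks with equal eigenvalue sets;
  input: list of (eigenvalue set, block size), output: sizes of the merged groups.\<close>
fun merge_runs :: "('e \<times> nat) list \<Rightarrow> nat list" where
  "merge_runs [] = []"
| "merge_runs [(e, s)] = [s]"
| "merge_runs ((e, s) # (e', s') # r) =
     (if e = e' then merge_runs ((e, s + s') # r) else s # merge_runs ((e', s') # r))"

text \<open>Sizes of the m eigenvalue groups of A (block sizes of the conformal m x m partition).\<close>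
definition eig_group_sizes :: "real mat \<Rightarrow> nat list \<Rightarrow> nat list" where
  "eig_group_sizes A bs = merge_runs (map (\<lambda>k. (blk_eigs A bs k, bs ! k)) [0..<length bs])"

end

theory Submission
  imports Defs "HOL-Library.Product_Lexorder" "Jordan_Normal_Form.Schur_Decomposition"
begin

definition bo :: "nat \<Rightarrow> nat \<Rightarrow> nat" where "bo l i = (if i < 2*l then i div 2 else i - l)"
definition bst :: "nat \<Rightarrow> nat \<Rightarrow> nat" where "bst l k = (if k \<le> l then 2*k else l + k)"
definition bsz :: "nat \<Rightarrow> nat \<Rightarrow> nat" where "bsz l k = (if k < l then 2 else 1)"

lemma bst_Suc: "bst l (Suc k) = bst l k + bsz l k"
  unfolding bst_def bsz_def by auto

lemma bsz_pos: "0 < bsz l k" unfolding bsz_def by auto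

lemma bst_mono: "k \<le> k' \<Longrightarrow> bst l k \<le> bst l k'"
  unfolding bst_def by auto

lemma bst_strict: "k < k' \<Longrightarrow> bst l k < bst l k'"
  unfolding bst_def by auto

lemma bst_0[simp]: "bst l 0 = 0" unfolding bst_def by auto

lemma bst_end: "bst l (l + r) = 2*l + r" unfolding bst_def by auto

lemma bo_iff: "bo l i = k \<longleftrightarrow> bst l k \<le> i \<and> i < bst l k + bsz l k"
  unfolding bo_def bst_def bsz_def by auto

lemma bo_lt: "i < 2*l + r \<Longrightarrow> bo l i < l + r"
  unfolding bo_def by auto

lemma bo_bst: "bst l k \<le> i \<Longrightarrow> i < bst l k + bsz l k \<Longrightarrow> bo l i = k"
  using bo_iff by blast

lemma bst_le_end: "k \<le> l + r \<Longrightarrow> bst l k \<le> 2*l + r"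
  unfolding bst_def by auto

lemma sum_bsz: "(\<Sum>k<j. bsz l k) = bst l j"
  by (induct j, auto simp: bst_Suc)

lemma tail_bo: "j \<le> l + r \<Longrightarrow> bo l (bst l j + i) = j + bo (l - min j l) i"
  unfolding bo_def bst_def by auto

lemma tail_bst: "bst (l - min j l) k + bst l j = bst l (j + k)"
  unfolding bst_def by auto

lemma tail_bsz: "bsz (l - min j l) k = bsz l (j + k)"
  unfolding bsz_def by auto

lemma head_bst: "k \<le> j \<Longrightarrow> bst (min j l) k = bst l k"
  unfolding bst_def by auto

lemma head_bsz: "k < j \<Longrightarrow> bsz (min j l) k = bsz l k"
  unfolding bsz_def by auto

lemma head_bo: "i < bst l j \<Longrightarrow> bo (min j l) i = bo l i"
  unfolding bo_def bst_def by (auto simp: min_def split: if_splits)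

lemma tail_dim: "j \<le> l + r \<Longrightarrow> 2 * (l - min j l) + (r - (j - min j l)) = 2*l + r - bst l j"
  unfolding bst_def by auto

lemma head_dim: "j \<le> l + r \<Longrightarrow> 2 * min j l + (j - min j l) = bst l j"
  unfolding bst_def by auto

context fixes bs :: "nat list" and l r :: nat
  assumes bs: "bs = replicate l 2 @ replicate r 1"
begin

lemma bs_len: "length bs = l + r" using bs by simp

lemma bs_sum: "sum_list bs = 2*l + r" using bs by (simp add: sum_list_replicate)

lemma bs_nth: "k < l + r \<Longrightarrow> bs ! k = bsz l k"
  using bs unfolding bsz_def by (auto simp: nth_append)

lemma bs_start: "k \<le> l + r \<Longrightarrow> blk_start bs k = bst l k"
  using bs unfolding blk_start_def bst_def
  by (auto simp: sum_list_replicate min_def)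

lemma bs_start': "blk_start bs k = bst l (min k (l+r))"
  using bs unfolding blk_start_def bst_def
  by (auto simp: sum_list_replicate min_def)

lemma bs_of: "i < 2*l + r \<Longrightarrow> blk_of bs i = bo l i"
  unfolding blk_of_def
proof (rule Least_equality)
  assume i: "i < 2*l + r"
  show "i < blk_start bs (Suc (bo l i))" unfolding bs_start' using i
    unfolding bo_def bst_def by (auto simp: min_def)
  fix k assume "i < blk_start bs (Suc k)"
  thus "bo l i \<le> k" unfolding bs_start' using i
    unfolding bo_def bst_def by (auto simp: min_def split: if_splits)
qed

end

definition subm :: "'a mat \<Rightarrow> nat \<Rightarrow> nat \<Rightarrow> nat \<Rightarrow> nat \<Rightarrow> 'a mat" where
  "subm M a b p q = mat p q (\<lambda>(i,j). M $$ (a+i, b+j))"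

lemma subm_carrier[simp]: "subm M a b p q \<in> carrier_mat p q"
  and subm_dim[simp]: "dim_row (subm M a b p q) = p" "dim_col (subm M a b p q) = q"
  unfolding subm_def by auto

lemma subm_index[simp]: "i < p \<Longrightarrow> j < q \<Longrightarrow> subm M a b p q $$ (i,j) = M $$ (a+i, b+j)"
  unfolding subm_def by auto

lemma subm_subm: "c + p' \<le> p \<Longrightarrow> d + q' \<le> q \<Longrightarrow>
  subm (subm M a b p q) c d p' q' = subm M (a+c) (b+d) p' q'"
  by (rule eq_matI, auto simp: ac_simps)

lemma subm_map: "a+p \<le> dim_row M \<Longrightarrow> b+q \<le> dim_col M \<Longrightarrow>
  map_mat f (subm M a b p q) = subm (map_mat f M) a b p q"
  by (rule eq_matI, auto)

lemma sum_skip: fixes f :: "nat \<Rightarrow> 'a::comm_monoid_add"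
  assumes "m \<le> n" "\<And>t. t < m \<Longrightarrow> f t = 0"
  shows "(\<Sum>t\<in>{0..<n}. f t) = (\<Sum>t\<in>{0..<n-m}. f (m+t))"
proof -
  have "{0..<n} = {0..<m} \<union> {m..<n}" using assms by auto
  hence "(\<Sum>t\<in>{0..<n}. f t) = (\<Sum>t\<in>{0..<m}. f t) + (\<Sum>t\<in>{m..<n}. f t)"
    by (simp add: sum.union_disjoint)
  also have "(\<Sum>t\<in>{0..<m}. f t) = 0" using assms by auto
  also have "{m..<n} = {0+m..<(n-m)+m}" using assms by auto
  also have "sum f \<dots> = (\<Sum>t\<in>{0..<n-m}. f (t+m))" by (rule sum.shift_bounds_nat_ivl)
  finally show ?thesis by (simp add: ac_simps)
qed

lemma sum_skip_end: fixes f :: "nat \<Rightarrow> 'a::comm_monoid_add"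
  assumes "m \<le> n" "\<And>t. m \<le> t \<Longrightarrow> t < n \<Longrightarrow> f t = 0"
  shows "(\<Sum>t\<in>{0..<n}. f t) = (\<Sum>t\<in>{0..<m}. f t)"
  using assms by (intro sum.mono_neutral_right, auto)

lemma eig_split: fixes M :: "'a::field mat"
  assumes M: "M \<in> carrier_mat n n" and k: "k \<le> n"
    and z: "\<And>i j. i < n \<Longrightarrow> j < k \<Longrightarrow> k \<le> i \<Longrightarrow> M $$ (i,j) = 0"
  shows "eigenvalue M e \<longleftrightarrow> eigenvalue (subm M 0 0 k k) e \<or> eigenvalue (subm M k k (n-k) (n-k)) e"
proof -
  let ?A = "subm M 0 0 k k" and ?D = "subm M k k (n-k) (n-k)"
  have eq: "char_matrix M e = four_block_mat (char_matrix ?A e) (subm M 0 k k (n-k)) (0\<^sub>m (n-k) k) (char_matrix ?D e)"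
    by (rule eq_matI, insert M k z, auto simp: char_matrix_def)
  have "det (char_matrix M e) = det (char_matrix ?A e) * det (char_matrix ?D e)"
    unfolding eq by (rule det_four_block_mat_lower_left_zero, auto)
  thus ?thesis using M
    by (simp add: eigenvalue_det[OF M] eigenvalue_det[OF subm_carrier])
qed

lemma sylvester: fixes B C X :: "complex mat"
  assumes B: "B \<in> carrier_mat p p" and C: "C \<in> carrier_mat q q" and X: "X \<in> carrier_mat p q"
    and eq: "B * X = X * C" and dis: "\<And>e. eigenvalue C e \<Longrightarrow> \<not> eigenvalue B e"
  shows "X = 0\<^sub>m p q"
proof -
  obtain es where cp: "char_poly C = (\<Prod>a\<leftarrow>es. [:- a, 1:])"
    using char_poly_factorized[OF C] by auto
  obtain T P Q where sd: "schur_decomposition C es = (T,P,Q)" by (cases "schur_decomposition C es", auto)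
  from schur_decomposition[OF C cp sd] have sim: "similar_mat_wit C T P Q"
    and ut: "upper_triangular T" and dg: "diag_mat T = es" by auto
  have qd: "q = dim_row C" using C by simp
  note sw = similar_mat_witD[OF qd sim]
  have CPTQ: "C = P * T * Q" and PQ: "P * Q = 1\<^sub>m q" and QP: "Q * P = 1\<^sub>m q"
    and T: "T \<in> carrier_mat q q" and P: "P \<in> carrier_mat q q" and Q: "Q \<in> carrier_mat q q"
    using sw by auto
  have evT: "eigenvalue C (T $$ (j,j))" if j: "j < q" for j
  proof -
    have "T $$ (j,j) \<in> set es" using j T dg unfolding diag_mat_def by auto
    hence "0 \<in> set (map (\<lambda>a. poly [:- a, 1:] (T $$ (j,j))) es)" by force
    hence "poly (char_poly C) (T $$ (j,j)) = 0" unfolding cp poly_prod_list map_map o_def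
      by (simp only: prod_list_zero_iff)
    thus ?thesis using eigenvalue_root_char_poly[OF C] by auto
  qed
  define Y where "Y = X * P"
  have Y: "Y \<in> carrier_mat p q" unfolding Y_def using X P by auto
  have BY: "B * Y = Y * T"
  proof -
    have "B * Y = (B * X) * P" unfolding Y_def using B X P by simp
    also have "\<dots> = X * C * P" unfolding eq ..
    also have "\<dots> = X * P * T * (Q * P)"
    proof -
      have PT: "P * T \<in> carrier_mat q q" using P T by simp
      have XP: "X * P \<in> carrier_mat p q" using X P by simp
      have "X * (P * T * Q) * P = X * ((P * T * Q) * P)"
        by (rule assoc_mult_mat[OF X _ P], use PT Q in simp)
      also have "(P * T * Q) * P = (P * T) * (Q * P)" by (rule assoc_mult_mat[OF PT Q P])
      also have "X * ((P * T) * (Q * P)) = (X * (P * T)) * (Q * P)"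
        by (rule assoc_mult_mat[OF X PT mult_carrier_mat[OF Q P], symmetric])
      also have "X * (P * T) = X * P * T" by (rule assoc_mult_mat[OF X P T, symmetric])
      finally show ?thesis unfolding CPTQ .
    qed
    also have "\<dots> = X * P * T" unfolding QP using X P T by simp
    finally show ?thesis unfolding Y_def .
  qed
  have colz: "j < q \<Longrightarrow> col Y j = 0\<^sub>v p" for j
  proof (induct j rule: less_induct)
    case (less j)
    note IH = less.hyps and jq = less.prems
    let ?v = "col Y j"
    have v: "?v \<in> carrier_vec p" using Y by auto
    have Bv: "B *\<^sub>v ?v = T $$ (j,j) \<cdot>\<^sub>v ?v"
    proof (rule eq_vecI)
      fix i assume i: "i < dim_vec (T $$ (j,j) \<cdot>\<^sub>v ?v)"
      hence i: "i < p" using Y by auto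
      have "(B *\<^sub>v ?v) $ i = (B * Y) $$ (i,j)" using B Y i jq by auto
      also have "\<dots> = (Y * T) $$ (i,j)" unfolding BY ..
      also have "\<dots> = (\<Sum>t\<in>{0..<q}. Y $$ (i,t) * T $$ (t,j))"
        using Y T i jq by (auto simp: scalar_prod_def)
      also have "\<dots> = (\<Sum>t\<in>{j}. Y $$ (i,t) * T $$ (t,j))"
      proof (rule sum.mono_neutral_right)
        show "\<forall>t\<in>{0..<q} - {j}. Y $$ (i, t) * T $$ (t, j) = 0"
        proof
          fix t assume t: "t \<in> {0..<q} - {j}"
          show "Y $$ (i, t) * T $$ (t, j) = 0"
          proof (cases "t < j")
            case True
            have "col Y t = 0\<^sub>v p" using IH[OF True] t by auto
            hence "col Y t $ i = 0" using i by auto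
            thus ?thesis using i Y t by auto
          next
            case False
            hence "j < t" using t by auto
            hence "T $$ (t,j) = 0" using ut T t unfolding upper_triangular_def by auto
            thus ?thesis by auto
          qed
        qed
      qed (use jq in auto)
      also have "\<dots> = (T $$ (j,j) \<cdot>\<^sub>v ?v) $ i" using i Y jq by auto
      finally show "(B *\<^sub>v ?v) $ i = (T $$ (j,j) \<cdot>\<^sub>v ?v) $ i" .
    qed (use B Y in auto)
    show ?case
    proof (rule ccontr)
      assume "?v \<noteq> 0\<^sub>v p"
      hence "eigenvector B ?v (T $$ (j,j))" unfolding eigenvector_def using B v Bv by auto
      hence "eigenvalue B (T $$ (j,j))" unfolding eigenvalue_def by auto
      thus False using dis evT jq by auto
    qed
  qed
  have Y0: "Y = 0\<^sub>m p q"
  proof (rule eq_matI)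
    fix i j assume "i < dim_row (0\<^sub>m p q)" "j < dim_col (0\<^sub>m p q)"
    hence ij: "i < p" "j < q" by auto
    have "col Y j $ i = 0" using colz[OF ij(2)] ij by auto
    thus "Y $$ (i,j) = 0\<^sub>m p q $$ (i,j)" using ij Y by auto
  qed (use Y in auto)
  have "X = X * (P * Q)" unfolding PQ using X by simp
  also have "\<dots> = Y * Q" unfolding Y_def using X P Q by simp
  also have "\<dots> = 0\<^sub>m p q" unfolding Y0 using Q by simp
  finally show ?thesis .
qed

lemma half_zero: fixes A Ah U :: "complex mat"
  assumes A: "A \<in> carrier_mat n n" and Ah: "Ah \<in> carrier_mat n n" and U: "U \<in> carrier_mat n n"
    and eq: "Ah * U = U * A" and k: "k \<le> n" and k': "k' \<le> n"
    and zA: "\<And>i j. i < n \<Longrightarrow> j < k \<Longrightarrow> k \<le> i \<Longrightarrow> A $$ (i,j) = 0"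
    and zAh: "\<And>i j. i < n \<Longrightarrow> j < k' \<Longrightarrow> k' \<le> i \<Longrightarrow> Ah $$ (i,j) = 0"
    and dis: "\<And>e. eigenvalue (subm A 0 0 k k) e \<Longrightarrow> \<not> eigenvalue (subm Ah k' k' (n-k') (n-k')) e"
    and ij: "k' \<le> i" "i < n" "j < k"
  shows "U $$ (i,j) = 0"
proof -
  let ?X = "subm U k' 0 (n-k') k" and ?B = "subm Ah k' k' (n-k') (n-k')" and ?C = "subm A 0 0 k k"
  have "?B * ?X = ?X * ?C"
  proof (rule eq_matI)
    fix a b assume "a < dim_row (?X * ?C)" "b < dim_col (?X * ?C)"
    hence ab: "a < n - k'" "b < k" by auto
    have "(?B * ?X) $$ (a,b) = (\<Sum>t\<in>{0..<n-k'}. Ah $$ (k'+a,k'+t) * U $$ (k'+t, b))"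
      using ab by (auto simp: scalar_prod_def)
    also have "\<dots> = (\<Sum>t\<in>{0..<n}. Ah $$ (k'+a,t) * U $$ (t, b))"
      by (rule sum_skip[symmetric], use k' zAh ab in auto)
    also have "\<dots> = (Ah * U) $$ (k'+a, b)"
      using ab Ah U k by (auto simp: scalar_prod_def)
    also have "\<dots> = (U * A) $$ (k'+a, b)" unfolding eq ..
    also have "\<dots> = (\<Sum>t\<in>{0..<n}. U $$ (k'+a,t) * A $$ (t, b))"
      using ab A U k by (auto simp: scalar_prod_def)
    also have "\<dots> = (\<Sum>t\<in>{0..<k}. U $$ (k'+a,t) * A $$ (t, b))"
      by (rule sum_skip_end, use k zA ab in auto)
    also have "\<dots> = (?X * ?C) $$ (a,b)"
      using ab by (auto simp: scalar_prod_def)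
    finally show "(?B * ?X) $$ (a,b) = (?X * ?C) $$ (a,b)" .
  qed auto
  hence "?X = 0\<^sub>m (n-k') k"
    by (intro sylvester[where B="?B" and C="?C" and X="?X"], auto dest: dis)
  hence "?X $$ (i - k', j) = 0" using ij by simp
  thus ?thesis using ij by simp
qed

lemma cmat_mult: "A \<in> carrier_mat n m \<Longrightarrow> B \<in> carrier_mat m p \<Longrightarrow>
  map_mat complex_of_real (A * B) = map_mat complex_of_real A * map_mat complex_of_real B"
  by (rule of_real_hom.mat_hom_mult)

lemma split_real: fixes A Ah U :: "real mat"
  assumes A: "A \<in> carrier_mat n n" and Ah: "Ah \<in> carrier_mat n n" and U: "U \<in> carrier_mat n n"
    and UtU: "transpose_mat U * U = 1\<^sub>m n"
    and eq: "Ah * U = U * A" and k: "k \<le> n" and k': "k' \<le> n"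
    and zA: "\<And>i j. i < n \<Longrightarrow> j < k \<Longrightarrow> k \<le> i \<Longrightarrow> A $$ (i,j) = 0"
    and zAh: "\<And>i j. i < n \<Longrightarrow> j < k' \<Longrightarrow> k' \<le> i \<Longrightarrow> Ah $$ (i,j) = 0"
    and d1: "\<And>e. eigenvalue (subm (map_mat complex_of_real A) 0 0 k k) e \<Longrightarrow>
       \<not> eigenvalue (subm (map_mat complex_of_real Ah) k' k' (n-k') (n-k')) e"
    and d2: "\<And>e. eigenvalue (subm (map_mat complex_of_real Ah) 0 0 k' k') e \<Longrightarrow>
       \<not> eigenvalue (subm (map_mat complex_of_real A) k k (n-k) (n-k)) e"
  shows "k' = k \<and> (\<forall>i j. i < n \<longrightarrow> j < n \<longrightarrow> (i < k) \<noteq> (j < k) \<longrightarrow> U $$ (i,j) = 0)"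
proof -
  let ?Ut = "transpose_mat U"
  have Ut: "?Ut \<in> carrier_mat n n" using U by simp
  have UUt: "U * ?Ut = 1\<^sub>m n" by (rule mat_mult_left_right_inverse[OF Ut U UtU])
  have eq2: "A * ?Ut = ?Ut * Ah"
  proof -
    have "?Ut * Ah = ?Ut * Ah * (U * ?Ut)" unfolding UUt using Ut Ah by simp
    also have "\<dots> = (?Ut * Ah * U) * ?Ut"
      by (rule assoc_mult_mat[OF mult_carrier_mat[OF Ut Ah] U Ut, symmetric])
    also have "?Ut * Ah * U = ?Ut * (Ah * U)" by (rule assoc_mult_mat[OF Ut Ah U])
    also have "\<dots> = ?Ut * (U * A)" unfolding eq ..
    also have "\<dots> = (?Ut * U) * A" by (rule assoc_mult_mat[OF Ut U A, symmetric])
    also have "\<dots> = A" unfolding UtU using A by simp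
    finally show ?thesis by simp
  qed
  let ?c = "map_mat complex_of_real"
  have ceq: "?c Ah * ?c U = ?c U * ?c A"
    using arg_cong[OF eq, of ?c] cmat_mult[OF Ah U] cmat_mult[OF U A] by simp
  have ceq2: "?c A * ?c ?Ut = ?c ?Ut * ?c Ah"
    using arg_cong[OF eq2, of ?c] cmat_mult[OF A Ut] cmat_mult[OF Ut Ah] by simp
  have G1: "U $$ (i,j) = 0" if "k' \<le> i" "i < n" "j < k" for i j
  proof -
    have "?c U $$ (i,j) = 0"
      by (rule half_zero[of "?c A" n "?c Ah" "?c U" k k'], use A Ah U ceq k k' zA zAh d1 that in auto)
    thus ?thesis using that U k by auto
  qed
  have G2: "U $$ (j,i) = 0" if "k \<le> i" "i < n" "j < k'" for i j
  proof -
    have "?c ?Ut $$ (i,j) = 0"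
      by (rule half_zero[of "?c Ah" n "?c A" "?c ?Ut" k' k], use A Ah Ut ceq2 k k' zA zAh d2 that in auto)
    thus ?thesis using that U k' by auto
  qed
  have c1: "(\<Sum>i\<in>{0..<k'}. U $$ (i,j) * U $$ (i,j)) = 1" if j: "j < k" for j
  proof -
    have "1 = (?Ut * U) $$ (j,j)" unfolding UtU using j k by simp
    also have "\<dots> = (\<Sum>i\<in>{0..<n}. U $$ (i,j) * U $$ (i,j))"
      using j k U by (auto simp: scalar_prod_def)
    also have "\<dots> = (\<Sum>i\<in>{0..<k'}. U $$ (i,j) * U $$ (i,j))"
      by (rule sum_skip_end, use k' G1 j in auto)
    finally show ?thesis by simp
  qed
  have c2: "(\<Sum>j\<in>{0..<k}. U $$ (i,j) * U $$ (i,j)) = 1" if i: "i < k'" for i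
  proof -
    have "1 = (U * ?Ut) $$ (i,i)" unfolding UUt using i k' by simp
    also have "\<dots> = (\<Sum>j\<in>{0..<n}. U $$ (i,j) * U $$ (i,j))"
      using i k' U by (auto simp: scalar_prod_def)
    also have "\<dots> = (\<Sum>j\<in>{0..<k}. U $$ (i,j) * U $$ (i,j))"
      by (rule sum_skip_end, use k G2 i in auto)
    finally show ?thesis by simp
  qed
  have "real k = (\<Sum>j\<in>{0..<k}. \<Sum>i\<in>{0..<k'}. U $$ (i,j) * U $$ (i,j))" using c1 by simp
  also have "\<dots> = (\<Sum>i\<in>{0..<k'}. \<Sum>j\<in>{0..<k}. U $$ (i,j) * U $$ (i,j))" by (rule sum.swap)
  also have "\<dots> = real k'" using c2 by simp
  finally have kk: "k' = k" by simp
  show ?thesis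
  proof (intro conjI allI impI kk)
    fix i j assume "i < n" "j < n" "(i < k) \<noteq> (j < k)"
    thus "U $$ (i,j) = 0" using G1[of i j] G2[of j i] kk by (cases "i < k", auto)
  qed
qed

lemma block_extract: fixes A Ah U :: "real mat"
  assumes A: "A \<in> carrier_mat n n" and Ah: "Ah \<in> carrier_mat n n" and U: "U \<in> carrier_mat n n"
    and UtU: "transpose_mat U * U = 1\<^sub>m n"
    and eq: "Ah * U = U * A" and k: "k \<le> n"
    and zA: "\<And>i j. i < n \<Longrightarrow> j < k \<Longrightarrow> k \<le> i \<Longrightarrow> A $$ (i,j) = 0"
    and zAh: "\<And>i j. i < n \<Longrightarrow> j < k \<Longrightarrow> k \<le> i \<Longrightarrow> Ah $$ (i,j) = 0"
    and zU: "\<And>i j. i < n \<Longrightarrow> j < n \<Longrightarrow> (i < k) \<noteq> (j < k) \<Longrightarrow> U $$ (i,j) = 0"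
  shows "U = four_block_mat (subm U 0 0 k k) (0\<^sub>m k (n-k)) (0\<^sub>m (n-k) k) (subm U k k (n-k) (n-k))"
    and "transpose_mat (subm U 0 0 k k) * subm U 0 0 k k = 1\<^sub>m k"
    and "transpose_mat (subm U k k (n-k) (n-k)) * subm U k k (n-k) (n-k) = 1\<^sub>m (n-k)"
    and "subm Ah k k (n-k) (n-k) * subm U k k (n-k) (n-k) = subm U k k (n-k) (n-k) * subm A k k (n-k) (n-k)"
proof -
  show "U = four_block_mat (subm U 0 0 k k) (0\<^sub>m k (n-k)) (0\<^sub>m (n-k) k) (subm U k k (n-k) (n-k))"
    by (rule eq_matI, use U k zU in auto)
  let ?Ut = "transpose_mat U"
  show "transpose_mat (subm U 0 0 k k) * subm U 0 0 k k = 1\<^sub>m k"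
  proof (rule eq_matI)
    fix a b assume "a < dim_row (1\<^sub>m k)" "b < dim_col (1\<^sub>m k)"
    hence ab: "a < k" "b < k" by auto
    have "(transpose_mat (subm U 0 0 k k) * subm U 0 0 k k) $$ (a,b) = (\<Sum>t\<in>{0..<k}. U $$ (t,a) * U $$ (t,b))"
      using ab by (auto simp: scalar_prod_def)
    also have "\<dots> = (\<Sum>t\<in>{0..<n}. U $$ (t,a) * U $$ (t,b))"
      by (rule sum_skip_end[symmetric], use k zU ab in auto)
    also have "\<dots> = (?Ut * U) $$ (a,b)" using ab k U by (auto simp: scalar_prod_def)
    also have "\<dots> = 1\<^sub>m k $$ (a,b)" unfolding UtU using ab k by auto
    finally show "(transpose_mat (subm U 0 0 k k) * subm U 0 0 k k) $$ (a,b) = 1\<^sub>m k $$ (a,b)" .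
  qed auto
  show "transpose_mat (subm U k k (n-k) (n-k)) * subm U k k (n-k) (n-k) = 1\<^sub>m (n-k)"
  proof (rule eq_matI)
    fix a b assume "a < dim_row (1\<^sub>m (n-k))" "b < dim_col (1\<^sub>m (n-k))"
    hence ab: "a < n-k" "b < n-k" by auto
    have "(transpose_mat (subm U k k (n-k) (n-k)) * subm U k k (n-k) (n-k)) $$ (a,b)
       = (\<Sum>t\<in>{0..<n-k}. U $$ (k+t,k+a) * U $$ (k+t,k+b))"
      using ab by (auto simp: scalar_prod_def)
    also have "\<dots> = (\<Sum>t\<in>{0..<n}. U $$ (t,k+a) * U $$ (t,k+b))"
      by (rule sum_skip[symmetric], use k zU ab in auto)
    also have "\<dots> = (?Ut * U) $$ (k+a,k+b)" using ab k U by (auto simp: scalar_prod_def)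
    also have "\<dots> = 1\<^sub>m (n-k) $$ (a,b)" unfolding UtU using ab k by auto
    finally show "(transpose_mat (subm U k k (n-k) (n-k)) * subm U k k (n-k) (n-k)) $$ (a,b) = 1\<^sub>m (n-k) $$ (a,b)" .
  qed auto
  show "subm Ah k k (n-k) (n-k) * subm U k k (n-k) (n-k) = subm U k k (n-k) (n-k) * subm A k k (n-k) (n-k)"
  proof (rule eq_matI)
    fix a b assume "a < dim_row (subm U k k (n-k) (n-k) * subm A k k (n-k) (n-k))"
      "b < dim_col (subm U k k (n-k) (n-k) * subm A k k (n-k) (n-k))"
    hence ab: "a < n-k" "b < n-k" by auto
    have "(subm Ah k k (n-k) (n-k) * subm U k k (n-k) (n-k)) $$ (a,b)
       = (\<Sum>t\<in>{0..<n-k}. Ah $$ (k+a,k+t) * U $$ (k+t,k+b))"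
      using ab by (auto simp: scalar_prod_def)
    also have "\<dots> = (\<Sum>t\<in>{0..<n}. Ah $$ (k+a,t) * U $$ (t,k+b))"
      by (rule sum_skip[symmetric], use k zAh ab in auto)
    also have "\<dots> = (Ah * U) $$ (k+a,k+b)" using ab k U Ah by (auto simp: scalar_prod_def)
    also have "\<dots> = (U * A) $$ (k+a,k+b)" unfolding eq ..
    also have "\<dots> = (\<Sum>t\<in>{0..<n}. U $$ (k+a,t) * A $$ (t,k+b))" using ab k U A by (auto simp: scalar_prod_def)
    also have "\<dots> = (\<Sum>t\<in>{0..<n-k}. U $$ (k+a,k+t) * A $$ (k+t,k+b))"
      by (rule sum_skip, use k zU ab in auto)
    also have "\<dots> = (subm U k k (n-k) (n-k) * subm A k k (n-k) (n-k)) $$ (a,b)"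
      using ab by (auto simp: scalar_prod_def)
    finally show "(subm Ah k k (n-k) (n-k) * subm U k k (n-k) (n-k)) $$ (a,b) =
      (subm U k k (n-k) (n-k) * subm A k k (n-k) (n-k)) $$ (a,b)" .
  qed auto
qed

abbreviation cmat :: "real mat \<Rightarrow> complex mat" where "cmat \<equiv> map_mat complex_of_real"

definition ceigs :: "complex mat \<Rightarrow> nat \<Rightarrow> nat \<Rightarrow> complex set" where
  "ceigs M l k = {z. eigenvalue (subm M (bst l k) (bst l k) (bsz l k) (bsz l k)) z}"

definition BT :: "'a::zero mat \<Rightarrow> nat \<Rightarrow> nat \<Rightarrow> bool" where
  "BT M l r \<longleftrightarrow> M \<in> carrier_mat (2*l+r) (2*l+r) \<and>
     (\<forall>i<2*l+r. \<forall>j<2*l+r. bo l j < bo l i \<longrightarrow> M $$ (i,j) = 0)"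

lemma bo_less_iff: "bo l i < j \<longleftrightarrow> i < bst l j"
  unfolding bo_def bst_def by auto

lemma BT_map: "BT M l r \<Longrightarrow> f 0 = 0 \<Longrightarrow> BT (map_mat f M) l r"
  unfolding BT_def by auto

lemma bst_Suc_le: "k < l + r \<Longrightarrow> bst l k + bsz l k \<le> 2*l + r"
  using bst_le_end[of "Suc k" l r] by (simp add: bst_Suc)

lemma BT_tail: assumes "BT M l r" "j \<le> l + r"
  shows "BT (subm M (bst l j) (bst l j) (2*l+r - bst l j) (2*l+r - bst l j)) (l - min j l) (r - (j - min j l))"
  unfolding BT_def
proof (intro conjI allI impI)
  show "subm M (bst l j) (bst l j) (2*l+r - bst l j) (2*l+r - bst l j)
    \<in> carrier_mat (2 * (l - min j l) + (r - (j - min j l))) (2 * (l - min j l) + (r - (j - min j l)))"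
    using tail_dim[OF assms(2)] by simp
  fix i i' assume i: "i < 2 * (l - min j l) + (r - (j - min j l))" and i': "i' < 2 * (l - min j l) + (r - (j - min j l))"
    and lt: "bo (l - min j l) i' < bo (l - min j l) i"
  have b: "bst l j \<le> 2*l+r" using bst_le_end[OF assms(2)] .
  have "bo l (bst l j + i') < bo l (bst l j + i)" unfolding tail_bo[OF assms(2)] using lt by simp
  moreover have "bst l j + i < 2*l+r" "bst l j + i' < 2*l+r" using i i' tail_dim[OF assms(2)] b by linarith+
  ultimately have "M $$ (bst l j + i, bst l j + i') = 0" using assms(1) unfolding BT_def by blast
  moreover have "i < 2*l+r - bst l j" "i' < 2*l+r - bst l j" using i i' tail_dim[OF assms(2)] b by linarith+
  ultimately show "subm M (bst l j) (bst l j) (2*l+r - bst l j) (2*l+r - bst l j) $$ (i,i') = 0"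
    by simp
qed

lemma ceigs_tail: assumes "j \<le> l + r" "k < l + r - j"
  shows "ceigs (subm M (bst l j) (bst l j) (2*l+r - bst l j) (2*l+r - bst l j)) (l - min j l) k = ceigs M l (j+k)"
proof -
  have lr: "k < (l - min j l) + (r - (j - min j l))" using assms by auto
  have "bst (l - min j l) k + bsz (l - min j l) k \<le> 2 * (l - min j l) + (r - (j - min j l))"
    by (rule bst_Suc_le[OF lr])
  hence le: "bst (l - min j l) k + bsz (l - min j l) k \<le> 2*l+r - bst l j" using tail_dim[OF assms(1)] by simp
  show ?thesis unfolding ceigs_def
    by (subst subm_subm[OF le le], simp add: tail_bst[of l j k, symmetric] tail_bsz ac_simps)
qed

lemma BT_head: assumes "BT M l r" "j \<le> l + r"
  shows "BT (subm M 0 0 (bst l j) (bst l j)) (min j l) (j - min j l)"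
  unfolding BT_def
proof (intro conjI allI impI)
  show "subm M 0 0 (bst l j) (bst l j) \<in> carrier_mat (2 * min j l + (j - min j l)) (2 * min j l + (j - min j l))"
    using head_dim[OF assms(2)] by simp
  fix i i' assume i: "i < 2 * min j l + (j - min j l)" and i': "i' < 2 * min j l + (j - min j l)"
    and lt: "bo (min j l) i' < bo (min j l) i"
  have i2: "i < bst l j" "i' < bst l j" using i i' head_dim[OF assms(2)] by auto
  have b: "bst l j \<le> 2*l+r" using bst_le_end[OF assms(2)] .
  have "bo l i' < bo l i" using lt unfolding head_bo[OF i2(1)] head_bo[OF i2(2)] .
  hence "M $$ (i, i') = 0" using assms(1) i2 b unfolding BT_def by auto
  thus "subm M 0 0 (bst l j) (bst l j) $$ (i,i') = 0" using i2 by simp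
qed

lemma ceigs_head: assumes "k < j"
  shows "ceigs (subm M 0 0 (bst l j) (bst l j)) (min j l) k = ceigs M l k"
proof -
  have le: "bst l k + bsz l k \<le> bst l j" using bst_mono[of "Suc k" j l] assms by (simp add: bst_Suc)
  have hb: "bst (min j l) k = bst l k" using head_bst[of k j l] assms by simp
  show ?thesis unfolding ceigs_def hb head_bsz[OF assms] using assms
    by (subst subm_subm[OF le le], simp)
qed

lemma BT_spec_aux: "l + r = N \<Longrightarrow> BT (M :: complex mat) l r \<Longrightarrow> eigenvalue M z \<longleftrightarrow> (\<exists>k<l+r. z \<in> ceigs M l k)"
proof (induct N arbitrary: M l r)
  case 0
  hence "M \<in> carrier_mat 0 0" unfolding BT_def by auto
  thus ?case using eigenvalue_imp_nonzero_dim[of M 0 z] 0 by auto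
next
  case (Suc N)
  let ?n = "2*l+r" and ?s = "bst l 1"
  have M: "M \<in> carrier_mat ?n ?n" using Suc unfolding BT_def by auto
  have s: "?s \<le> ?n" using bst_le_end[of 1 l r] Suc by auto
  have ss: "?s = bsz l 0" using bst_Suc[of l 0] by simp
  have z: "M $$ (i,j) = 0" if "i < ?n" "j < ?s" "?s \<le> i" for i j
  proof -
    have "bo l j < 1" using that bo_less_iff[of l j 1] by auto
    moreover have "\<not> bo l i < 1" using that bo_less_iff[of l i 1] by auto
    ultimately show ?thesis using Suc(3) that s unfolding BT_def by auto
  qed
  note es = eig_split[OF M s z]
  have head: "eigenvalue (subm M 0 0 ?s ?s) z \<longleftrightarrow> z \<in> ceigs M l 0"
    unfolding ceigs_def using ss by simp
  have j1: "1 \<le> l + r" using Suc by auto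
  note BTt = BT_tail[OF Suc(3) j1]
  have NN: "l - min 1 l + (r - (1 - min 1 l)) = N" using Suc by auto
  note IH = Suc(1)[OF NN BTt]
  have tail: "eigenvalue (subm M ?s ?s (?n - ?s) (?n - ?s)) z \<longleftrightarrow> (\<exists>k<N. z \<in> ceigs M l (Suc k))"
    unfolding IH NN using ceigs_tail[OF j1, of _ M] Suc(2) by auto
  have "eigenvalue M z \<longleftrightarrow> z \<in> ceigs M l 0 \<or> (\<exists>k<N. z \<in> ceigs M l (Suc k))"
    using es head tail by simp
  also have "\<dots> \<longleftrightarrow> (\<exists>k<l+r. z \<in> ceigs M l k)"
  proof
    assume "z \<in> ceigs M l 0 \<or> (\<exists>k<N. z \<in> ceigs M l (Suc k))"
    thus "\<exists>k<l+r. z \<in> ceigs M l k" using Suc(2) by (auto intro: exI[of _ 0])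
  next
    assume "\<exists>k<l+r. z \<in> ceigs M l k"
    then obtain k where k: "k < l + r" "z \<in> ceigs M l k" by auto
    show "z \<in> ceigs M l 0 \<or> (\<exists>k<N. z \<in> ceigs M l (Suc k))"
      using k Suc(2) by (cases k, auto)
  qed
  finally show ?case .
qed

lemma BT_spec: "BT (M :: complex mat) l r \<Longrightarrow> eigenvalue M z \<longleftrightarrow> (\<exists>k<l+r. z \<in> ceigs M l k)"
  using BT_spec_aux by blast

definition OS :: "real mat \<Rightarrow> nat \<Rightarrow> nat \<Rightarrow> bool" where
  "OS A l r \<longleftrightarrow> BT A l r \<and> (\<forall>k<l. \<forall>z\<in>ceigs (cmat A) l k. Im z \<noteq> 0) \<and>
    (\<forall>i j. i < j \<and> (j < l \<or> (l \<le> i \<and> j < l + r)) \<longrightarrow>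
      (\<forall>z\<in>ceigs (cmat A) l i. \<forall>w\<in>ceigs (cmat A) l j. cmod z \<le> cmod w \<and> (cmod z = cmod w \<longrightarrow> Re w \<le> Re z)))"

lemma det2: assumes "(M::'a::comm_ring_1 mat) \<in> carrier_mat 2 2"
  shows "det M = M$$(0,0) * M$$(1,1) - M$$(0,1) * M$$(1,0)"
proof -
  have "det M = (\<Sum>j<2. M $$ (0,j) * cofactor M 0 j)"
    by (rule laplace_expansion_row[OF assms], simp)
  also have "\<dots> = M$$(0,0) * cofactor M 0 0 + M$$(0,1) * cofactor M 0 1"
    by (simp add: numeral_2_eq_2)
  also have "cofactor M 0 0 = M$$(1,1)" unfolding cofactor_def
    using assms by (subst det_single, auto simp: mat_delete_def)
  also have "cofactor M 0 1 = - M$$(1,0)" unfolding cofactor_def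
    using assms by (subst det_single, auto simp: mat_delete_def)
  finally show ?thesis by (simp add: algebra_simps)
qed

lemma eig1: assumes M: "(M :: complex mat) \<in> carrier_mat 1 1"
  shows "eigenvalue M z \<longleftrightarrow> z = M $$ (0,0)"
proof -
  have "det (char_matrix M z) = M $$ (0,0) - z"
    by (subst det_single, use M in \<open>auto simp: char_matrix_def\<close>)
  thus ?thesis unfolding eigenvalue_det[OF M] by auto
qed

lemma eig2: assumes M: "(M :: complex mat) \<in> carrier_mat 2 2"
  shows "eigenvalue M z \<longleftrightarrow> (M $$ (0,0) - z) * (M $$ (1,1) - z) - M $$ (0,1) * M $$ (1,0) = 0"
proof -
  have "det (char_matrix M z) = (M $$ (0,0) - z) * (M $$ (1,1) - z) - M $$ (0,1) * M $$ (1,0)"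
    by (subst det2, use M in \<open>auto simp: char_matrix_def\<close>)
  thus ?thesis unfolding eigenvalue_det[OF M] by auto
qed

lemma quad_roots: fixes t d :: real
  assumes nr: "\<And>z. z^2 - complex_of_real t * z + complex_of_real d = 0 \<Longrightarrow> Im z \<noteq> 0"
  shows "\<exists>v. 0 < Im v \<and> {z. z^2 - complex_of_real t * z + complex_of_real d = 0} = {v, cnj v}"
proof -
  let ?t = "complex_of_real t" and ?d = "complex_of_real d"
  define s where "s = csqrt (?t^2 - 4 * ?d)"
  define z0 where "z0 = (?t + s) / 2"
  have s2: "s^2 = ?t^2 - 4 * ?d" unfolding s_def by simp
  have r0: "z0^2 - ?t * z0 + ?d = 0"
  proof -
    have "4 * (z0^2 - ?t * z0 + ?d) = s^2 - ?t^2 + 4 * ?d" unfolding z0_def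
      by (simp add: power2_eq_square field_simps)
    hence "4 * (z0^2 - ?t * z0 + ?d) = 0" unfolding s2 by simp
    thus ?thesis by (metis mult_eq_0_iff zero_neq_numeral)
  qed
  have c0: "(cnj z0)^2 - ?t * cnj z0 + ?d = 0"
  proof -
    have "cnj (z0^2 - ?t * z0 + ?d) = (cnj z0)^2 - ?t * cnj z0 + ?d" by simp
    thus ?thesis using r0 by simp
  qed
  have nz: "Im z0 \<noteq> 0" using nr r0 by auto
  have cz: "cnj z0 \<noteq> z0" using nz by (metis cnj.simps(2) neg_equal_zero)
  have roots: "w = z0 \<or> w = ?t - z0" if "w^2 - ?t * w + ?d = 0" for w
  proof -
    have "(w - z0) * (w + z0 - ?t) = (w^2 - ?t*w + ?d) - (z0^2 - ?t*z0 + ?d)"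
      by (simp add: power2_eq_square algebra_simps)
    hence "(w - z0) * (w + z0 - ?t) = 0" using that r0 by simp
    hence "w - z0 = 0 \<or> w + z0 - ?t = 0" by simp
    thus ?thesis by (auto simp: algebra_simps)
  qed
  have cnjz: "cnj z0 = ?t - z0" using roots[OF c0] cz by auto
  have S: "{z. z^2 - ?t * z + ?d = 0} = {z0, cnj z0}"
    using roots r0 c0 cnjz by auto
  show ?thesis
  proof (cases "0 < Im z0")
    case True thus ?thesis using S by auto
  next
    case False
    hence "0 < Im (cnj z0)" using nz by auto
    thus ?thesis using S by (intro exI[of _ "cnj z0"], auto)
  qed
qed

lemma blk_struct: assumes OS: "OS A l r" and k: "k < l + r"
  shows "\<exists>v. ceigs (cmat A) l k = {v, cnj v} \<and> 0 \<le> Im v \<and> (k < l \<longleftrightarrow> 0 < Im v)"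
proof -
  have A: "A \<in> carrier_mat (2*l+r) (2*l+r)" using OS unfolding OS_def BT_def by auto
  let ?s = "bst l k"
  have le: "?s + bsz l k \<le> 2*l+r" by (rule bst_Suc_le[OF k])
  have sm: "subm (cmat A) ?s ?s (bsz l k) (bsz l k) = cmat (subm A ?s ?s (bsz l k) (bsz l k))"
    by (rule subm_map[symmetric], use A le in auto)
  show ?thesis
  proof (cases "k < l")
    case True
    hence b2: "bsz l k = 2" unfolding bsz_def by auto
    let ?M = "subm (cmat A) ?s ?s 2 2"
    have M: "?M \<in> carrier_mat 2 2" by simp
    let ?a = "A $$ (?s, ?s)" and ?b = "A $$ (?s, ?s+1)" and ?c = "A $$ (?s+1, ?s)" and ?d = "A $$ (?s+1,?s+1)"
    have ent: "?M $$ (0,0) = complex_of_real ?a" "?M $$ (0,1) = complex_of_real ?b"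
      "?M $$ (1,0) = complex_of_real ?c" "?M $$ (1,1) = complex_of_real ?d"
      using A le b2 by auto
    have ev: "eigenvalue ?M z \<longleftrightarrow> z^2 - complex_of_real (?a + ?d) * z + complex_of_real (?a * ?d - ?b * ?c) = 0" for z
      unfolding eig2[OF M] ent by (simp add: power2_eq_square algebra_simps)
    have ce: "ceigs (cmat A) l k = {z. z^2 - complex_of_real (?a + ?d) * z + complex_of_real (?a * ?d - ?b * ?c) = 0}"
      unfolding ceigs_def b2 ev ..
    have nr: "Im z \<noteq> 0" if "z^2 - complex_of_real (?a + ?d) * z + complex_of_real (?a * ?d - ?b * ?c) = 0" for z
    proof -
      have "z \<in> ceigs (cmat A) l k" unfolding ce using that by simp
      thus ?thesis using OS True unfolding OS_def by auto
    qed
    from quad_roots[OF nr] obtain v where "0 < Im v" and "{z. z^2 - complex_of_real (?a + ?d) * z + complex_of_real (?a * ?d - ?b * ?c) = 0} = {v, cnj v}" by blast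
    thus ?thesis using True unfolding ce by (intro exI[of _ v], auto)
  next
    case False
    hence b1: "bsz l k = 1" unfolding bsz_def by auto
    let ?M = "subm (cmat A) ?s ?s 1 1"
    have M: "?M \<in> carrier_mat 1 1" by simp
    have ent: "?M $$ (0,0) = complex_of_real (A $$ (?s,?s))" using A le b1 by auto
    have ce: "ceigs (cmat A) l k = {complex_of_real (A $$ (?s,?s))}"
      unfolding ceigs_def b1 eig1[OF M] ent by auto
    show ?thesis using False unfolding ce by (intro exI[of _ "complex_of_real (A $$ (?s,?s))"], auto)
  qed
qed

definition key :: "complex \<Rightarrow> bool \<times> real \<times> real" where
  "key v = (Im v = 0, cmod v, - Re v)"

lemma key_inj: assumes "0 \<le> Im v" "0 \<le> Im w" "key v = key w" shows "v = w"
proof -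
  have m: "cmod v = cmod w" and r: "Re v = Re w" using assms(3) unfolding key_def by auto
  have "(Im v)^2 = (Im w)^2" using m r unfolding cmod_def by (metis add_diff_cancel_left' real_sqrt_eq_iff power2_eq_square)
  hence "Im v = Im w" using assms(1,2) by (simp add: power2_eq_iff_nonneg)
  thus ?thesis using r by (simp add: complex_eq_iff)
qed

lemma pair_eq: assumes "0 \<le> Im v" "0 \<le> Im w" "x \<in> {v, cnj v}" "x \<in> {w, cnj w}" shows "v = w"
  using assms by (auto simp: complex_eq_iff)

definition vv :: "real mat \<Rightarrow> nat \<Rightarrow> nat \<Rightarrow> complex" where
  "vv A l k = (SOME v. ceigs (cmat A) l k = {v, cnj v} \<and> 0 \<le> Im v \<and> (k < l \<longleftrightarrow> 0 < Im v))"

lemma vv: assumes "OS A l r" "k < l + r"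
  shows "ceigs (cmat A) l k = {vv A l k, cnj (vv A l k)} \<and> 0 \<le> Im (vv A l k) \<and> (k < l \<longleftrightarrow> 0 < Im (vv A l k))"
  unfolding vv_def by (rule someI_ex[OF blk_struct[OF assms]])

lemma vv_sorted: assumes OS: "OS A l r" and ij: "i < j" "j < l + r"
  shows "key (vv A l i) \<le> key (vv A l j)"
proof -
  note vi = vv[OF OS, of i] and vj = vv[OF OS, of j]
  have ord: "cmod (vv A l i) \<le> cmod (vv A l j) \<and> (cmod (vv A l i) = cmod (vv A l j) \<longrightarrow> Re (vv A l j) \<le> Re (vv A l i))"
    if "j < l \<or> (l \<le> i \<and> j < l + r)"
  proof -
    have o: "\<forall>z\<in>ceigs (cmat A) l i. \<forall>w\<in>ceigs (cmat A) l j. cmod z \<le> cmod w \<and> (cmod z = cmod w \<longrightarrow> Re w \<le> Re z)"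
      using OS ij that unfolding OS_def by blast
    have "vv A l i \<in> ceigs (cmat A) l i" "vv A l j \<in> ceigs (cmat A) l j" using vi vj ij by auto
    thus ?thesis using o by blast
  qed
  show ?thesis
  proof (cases "j < l")
    case True
    thus ?thesis using ord[OF disjI1[OF True]] vi vj ij unfolding key_def less_eq_prod_def by auto
  next
    case False
    show ?thesis
    proof (cases "i < l")
      case True
      thus ?thesis using vi vj ij False unfolding key_def less_eq_prod_def by auto
    next
      case False
      hence "l \<le> i \<and> j < l + r" using ij by auto
      thus ?thesis using ord vi vj ij \<open>\<not> j < l\<close> False unfolding key_def less_eq_prod_def by auto
    qed
  qed
qed

definition jj :: "real mat \<Rightarrow> nat \<Rightarrow> nat \<Rightarrow> nat" where
  "jj A l r = (LEAST j. j = l + r \<or> (j < l + r \<and> vv A l j \<noteq> vv A l 0))"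

lemma jj_facts: assumes OS: "OS A l r" and N: "0 < l + r"
  shows "0 < jj A l r" "jj A l r \<le> l + r" "\<And>k. k < jj A l r \<Longrightarrow> vv A l k = vv A l 0"
    "\<And>k. jj A l r \<le> k \<Longrightarrow> k < l + r \<Longrightarrow> vv A l k \<noteq> vv A l 0"
proof -
  let ?P = "\<lambda>j. j = l + r \<or> (j < l + r \<and> vv A l j \<noteq> vv A l 0)"
  have P: "?P (l+r)" by simp
  show le: "jj A l r \<le> l + r" unfolding jj_def by (rule Least_le, simp)
  have Pj: "?P (jj A l r)" unfolding jj_def by (rule LeastI[of ?P, OF P])
  show pos: "0 < jj A l r"
  proof (rule ccontr)
    assume "\<not> 0 < jj A l r" hence "jj A l r = 0" by simp
    thus False using Pj N by auto
  qed
  show lt: "vv A l k = vv A l 0" if "k < jj A l r" for k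
  proof -
    have "\<not> ?P k" using not_less_Least[OF that[unfolded jj_def]] .
    thus ?thesis using that le by auto
  qed
  show "vv A l k \<noteq> vv A l 0" if k: "jj A l r \<le> k" "k < l + r" for k
  proof -
    let ?j = "jj A l r"
    have j: "?j < l + r" "vv A l ?j \<noteq> vv A l 0" using Pj k by auto
    have v0: "0 \<le> Im (vv A l 0)" using vv[OF OS N] by auto
    have vj: "0 \<le> Im (vv A l ?j)" using vv[OF OS j(1)] by auto
    have vk: "0 \<le> Im (vv A l k)" using vv[OF OS k(2)] by auto
    have "key (vv A l 0) \<le> key (vv A l ?j)" using vv_sorted[OF OS pos j(1)] .
    moreover have "key (vv A l 0) \<noteq> key (vv A l ?j)" using key_inj[OF v0 vj] j(2) by metis
    ultimately have lt1: "key (vv A l 0) < key (vv A l ?j)" by simp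
    have "key (vv A l ?j) \<le> key (vv A l k)"
      using vv_sorted[OF OS _ k(2), of ?j] k(1) by (cases "?j = k", auto)
    hence "key (vv A l 0) < key (vv A l k)" using lt1 by simp
    thus ?thesis by auto
  qed
qed

lemma OS_BT: "OS A l r \<Longrightarrow> BT (cmat A) l r"
  unfolding OS_def by (auto intro: BT_map)

lemma OS_carrier: "OS A l r \<Longrightarrow> A \<in> carrier_mat (2*l+r) (2*l+r)"
  unfolding OS_def BT_def by auto

lemma eig_vv: assumes OS: "OS A l r" and z: "z \<in> ceigs (cmat A) l k" and k: "k < l + r" and im: "0 \<le> Im z"
  shows "z = vv A l k"
proof -
  note v = vv[OF OS k]
  show ?thesis using z im v by (auto simp: complex_eq_iff)
qed

lemma spec_min: assumes OS: "OS A l r" and ev: "eigenvalue (cmat A) z" and im: "0 \<le> Im z"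
  shows "key (vv A l 0) \<le> key z"
proof -
  obtain k where k: "k < l + r" "z \<in> ceigs (cmat A) l k" using BT_spec[OF OS_BT[OF OS]] ev by auto
  have z: "z = vv A l k" using eig_vv[OF OS k(2) k(1) im] .
  show ?thesis unfolding z using vv_sorted[OF OS _ k(1), of 0] by (cases k, auto)
qed

lemma v0_eig: assumes OS: "OS A l r" and N: "0 < l + r"
  shows "eigenvalue (cmat A) (vv A l 0)"
  unfolding BT_spec[OF OS_BT[OF OS]] using vv[OF OS N] N by auto

lemma head_spec: assumes OS: "OS A l r" and N: "0 < l + r"
  and ev: "eigenvalue (subm (cmat A) 0 0 (bst l (jj A l r)) (bst l (jj A l r))) z"
  shows "z \<in> {vv A l 0, cnj (vv A l 0)}"
proof -
  let ?j = "jj A l r"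
  note jf = jj_facts[OF OS N]
  note BTh = BT_head[OF OS_BT[OF OS] jf(2)]
  obtain k where k: "k < min ?j l + (?j - min ?j l)" "z \<in> ceigs (subm (cmat A) 0 0 (bst l ?j) (bst l ?j)) (min ?j l) k"
    using BT_spec[OF BTh] ev by auto
  have kj: "k < ?j" using k(1) by auto
  have "z \<in> ceigs (cmat A) l k" using k(2) unfolding ceigs_head[OF kj] .
  thus ?thesis using vv[OF OS, of k] jf(3)[OF kj] kj jf(2) by auto
qed

lemma tail_spec: assumes OS: "OS A l r" and N: "0 < l + r"
  and ev: "eigenvalue (subm (cmat A) (bst l (jj A l r)) (bst l (jj A l r)) (2*l+r - bst l (jj A l r)) (2*l+r - bst l (jj A l r))) z"
  shows "z \<notin> {vv A l 0, cnj (vv A l 0)}"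
proof
  assume z: "z \<in> {vv A l 0, cnj (vv A l 0)}"
  let ?j = "jj A l r"
  note jf = jj_facts[OF OS N]
  note BTt = BT_tail[OF OS_BT[OF OS] jf(2)]
  obtain k where k: "k < (l - min ?j l) + (r - (?j - min ?j l))" and
    zk: "z \<in> ceigs (subm (cmat A) (bst l ?j) (bst l ?j) (2*l+r - bst l ?j) (2*l+r - bst l ?j)) (l - min ?j l) k"
    using BT_spec[OF BTt] ev by auto
  have k': "k < l + r - ?j" using k jf(2) by auto
  have "z \<in> ceigs (cmat A) l (?j + k)" using zk unfolding ceigs_tail[OF jf(2) k'] .
  hence z2: "z \<in> {vv A l (?j+k), cnj (vv A l (?j+k))}" using vv[OF OS, of "?j+k"] k' by auto
  have "vv A l (?j + k) = vv A l 0"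
    by (rule pair_eq[OF _ _ z2 z], insert vv[OF OS, of "?j+k"] vv[OF OS N] k', auto)
  thus False using jf(4)[of "?j+k"] k' by auto
qed

lemma zero_split: assumes OS: "OS A l r" and i: "i < 2*l+r" "i' < bst l j" "bst l j \<le> i"
  shows "A $$ (i,i') = 0"
proof -
  have "bo l i' < j" "\<not> bo l i < j" using i bo_less_iff by auto
  hence "bo l i' < bo l i" by simp
  moreover have "i' < 2*l+r" using i by simp
  ultimately show ?thesis using OS i unfolding OS_def BT_def by auto
qed

lemma OS_tail: assumes OS: "OS A l r" and j: "j \<le> l + r"
  shows "OS (subm A (bst l j) (bst l j) (2*l+r - bst l j) (2*l+r - bst l j)) (l - min j l) (r - (j - min j l))"
proof -
  let ?p = "bst l j" and ?n = "2*l+r"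
  let ?T = "subm A ?p ?p (?n - ?p) (?n - ?p)"
  have A: "A \<in> carrier_mat ?n ?n" using OS_carrier[OF OS] .
  have cT: "cmat ?T = subm (cmat A) ?p ?p (?n - ?p) (?n - ?p)"
    by (rule subm_map, use A bst_le_end[OF j] in auto)
  have ce: "ceigs (cmat ?T) (l - min j l) k = ceigs (cmat A) l (j+k)" if "k < l + r - j" for k
    unfolding cT by (rule ceigs_tail[OF j that])
  let ?lt = "l - min j l" and ?rt = "r - (j - min j l)"
  show ?thesis unfolding OS_def
  proof (intro conjI)
    show "BT ?T ?lt ?rt" using BT_tail[OF _ j] OS unfolding OS_def by auto
    show "\<forall>k<?lt. \<forall>z\<in>ceigs (cmat ?T) ?lt k. Im z \<noteq> 0"
    proof (intro allI impI ballI)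
      fix k z assume k: "k < ?lt" and z: "z \<in> ceigs (cmat ?T) ?lt k"
      have k': "k < l + r - j" "j + k < l" using k by auto
      show "Im z \<noteq> 0" using z unfolding ce[OF k'(1)] using OS k'(2) unfolding OS_def by auto
    qed
    show "\<forall>i i'. i < i' \<and> (i' < ?lt \<or> (?lt \<le> i \<and> i' < ?lt + ?rt)) \<longrightarrow>
      (\<forall>z\<in>ceigs (cmat ?T) ?lt i. \<forall>w\<in>ceigs (cmat ?T) ?lt i'. cmod z \<le> cmod w \<and> (cmod z = cmod w \<longrightarrow> Re w \<le> Re z))"
    proof (intro allI impI ballI)
      fix i i' z w assume ii: "i < i' \<and> (i' < ?lt \<or> (?lt \<le> i \<and> i' < ?lt + ?rt))"
        and z: "z \<in> ceigs (cmat ?T) ?lt i" and w: "w \<in> ceigs (cmat ?T) ?lt i'"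
      have i': "i' < l + r - j" "i < l + r - j" using ii j by auto
      have c: "j + i < j + i' \<and> (j + i' < l \<or> (l \<le> j + i \<and> j + i' < l + r))" using ii j by auto
      have z': "z \<in> ceigs (cmat A) l (j+i)" using z unfolding ce[OF i'(2)] .
      have w': "w \<in> ceigs (cmat A) l (j+i')" using w unfolding ce[OF i'(1)] .
      show "cmod z \<le> cmod w \<and> (cmod z = cmod w \<longrightarrow> Re w \<le> Re z)"
      proof -
        have o: "\<forall>a b. a < b \<and> (b < l \<or> (l \<le> a \<and> b < l + r)) \<longrightarrow>
          (\<forall>z\<in>ceigs (cmat A) l a. \<forall>w\<in>ceigs (cmat A) l b. cmod z \<le> cmod w \<and> (cmod z = cmod w \<longrightarrow> Re w \<le> Re z))"
          using OS unfolding OS_def by blast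
        from o[rule_format, OF c z' w'] show ?thesis .
      qed
    qed
  qed
qed

lemma merge_runs_block:
  "(ys = [] \<or> fst (hd ys) \<noteq> e) \<Longrightarrow>
   merge_runs ((e,s) # map (\<lambda>x. (e, f x)) xs @ ys) = (s + sum_list (map f xs)) # merge_runs ys"
proof (induct xs arbitrary: s)
  case Nil
  thus ?case by (cases ys, auto)
next
  case (Cons x xs)
  have "merge_runs ((e,s) # map (\<lambda>x. (e, f x)) (x # xs) @ ys)
    = merge_runs ((e, s + f x) # map (\<lambda>x. (e, f x)) xs @ ys)" by simp
  also have "\<dots> = (s + f x + sum_list (map f xs)) # merge_runs ys" using Cons by simp
  finally show ?case by (simp add: ac_simps)
qed

lemma sum_list_upt0: "sum_list (map f [0..<n]) = (\<Sum>k<n. f k)"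
  by (induct n, auto)

definition grp :: "real mat \<Rightarrow> nat \<Rightarrow> nat \<Rightarrow> nat list" where
  "grp A l r = merge_runs (map (\<lambda>k. (ceigs (cmat A) l k, bsz l k)) [0..<l+r])"

lemma grp_split: assumes OS: "OS A l r" and N: "0 < l + r"
  shows "grp A l r = bst l (jj A l r) # grp (subm A (bst l (jj A l r)) (bst l (jj A l r)) (2*l+r - bst l (jj A l r)) (2*l+r - bst l (jj A l r)))
    (l - min (jj A l r) l) (r - (jj A l r - min (jj A l r) l))"
proof -
  let ?j = "jj A l r" and ?N = "l + r" and ?E = "ceigs (cmat A) l 0"
  let ?p = "bst l ?j" and ?n = "2*l+r"
  let ?T = "subm A ?p ?p (?n - ?p) (?n - ?p)"
  let ?lt = "l - min ?j l" and ?rt = "r - (?j - min ?j l)"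
  note jf = jj_facts[OF OS N]
  have A: "A \<in> carrier_mat ?n ?n" using OS_carrier[OF OS] .
  have cT: "cmat ?T = subm (cmat A) ?p ?p (?n - ?p) (?n - ?p)"
    by (rule subm_map, use A bst_le_end[OF jf(2)] in auto)
  have Ek: "ceigs (cmat A) l k = ?E" if "k < ?j" for k
    using vv[OF OS, of k] vv[OF OS N] jf(3)[OF that] that jf(2) by auto
  have up0: "[0..<?N] = [0..<?j] @ [?j..<?N]" using jf(2)
    using upt_add_eq_append[of 0 ?j "?N - ?j"] by simp
  have up: "[0..<?N] = 0 # [1..<?j] @ [?j..<?N]" unfolding up0 using jf(1) by (simp add: upt_conv_Cons)
  have m1: "map (\<lambda>k. (ceigs (cmat A) l k, bsz l k)) [1..<?j] = map (\<lambda>k. (?E, bsz l k)) [1..<?j]"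
  proof (rule map_cong[OF refl])
    fix x assume "x \<in> set [1..<?j]"
    hence "x < ?j" by simp
    from Ek[OF this] show "(ceigs (cmat A) l x, bsz l x) = (?E, bsz l x)" by (simp only:)
  qed
  have sz: "bsz l 0 + sum_list (map (bsz l) [1..<?j]) = ?p"
  proof -
    have "bsz l 0 + sum_list (map (bsz l) [1..<?j]) = sum_list (map (bsz l) [0..<?j])"
      using jf(1) by (simp add: upt_conv_Cons)
    also have "\<dots> = (\<Sum>k<?j. bsz l k)" by (rule sum_list_upt0)
    also have "\<dots> = ?p" by (rule sum_bsz)
    finally show ?thesis .
  qed
  let ?ys = "map (\<lambda>k. (ceigs (cmat A) l k, bsz l k)) [?j..<?N]"
  have ys: "?ys = [] \<or> fst (hd ?ys) \<noteq> ?E"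
  proof (cases "?j < ?N")
    case True
    have hd: "fst (hd ?ys) = ceigs (cmat A) l ?j" using True by (simp add: upt_conv_Cons)
    have "ceigs (cmat A) l ?j \<noteq> ?E"
    proof
      assume eq: "ceigs (cmat A) l ?j = ?E"
      have "vv A l ?j \<in> ?E" using vv[OF OS True] eq by auto
      hence "vv A l ?j = vv A l 0"
        by (intro pair_eq[of _ _ "vv A l ?j"], insert vv[OF OS True] vv[OF OS N], auto)
      thus False using jf(4)[OF le_refl True] by simp
    qed
    thus ?thesis using hd by simp
  qed simp
  have ys2: "?ys = map (\<lambda>k. (ceigs (cmat ?T) ?lt k, bsz ?lt k)) [0..<?lt + ?rt]"
  proof -
    have "[?j..<?N] = map (\<lambda>k. ?j + k) [0..<?N - ?j]"
    proof -
      have "map (\<lambda>k. k + ?j) [0..<?N - ?j] = [?j..<?N - ?j + ?j]" by (rule map_add_upt)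
      thus ?thesis using jf(2) by (simp add: add.commute)
    qed
    hence "?ys = map (\<lambda>k. (ceigs (cmat A) l (?j + k), bsz l (?j + k))) [0..<?N - ?j]" by simp
    also have "\<dots> = map (\<lambda>k. (ceigs (cmat ?T) ?lt k, bsz ?lt k)) [0..<?N - ?j]"
      by (rule map_cong, simp, simp add: cT ceigs_tail[OF jf(2)] tail_bsz)
    also have "?N - ?j = ?lt + ?rt" using jf(2) by auto
    finally show ?thesis .
  qed
  have "grp A l r = merge_runs ((?E, bsz l 0) # map (\<lambda>k. (?E, bsz l k)) [1..<?j] @ ?ys)"
    unfolding grp_def up by (simp only: list.map map_append m1)
  also have "\<dots> = ?p # merge_runs ?ys" unfolding merge_runs_block[OF ys] sz ..
  also have "merge_runs ?ys = grp ?T ?lt ?rt" unfolding ys2 grp_def ..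
  finally show ?thesis .
qed

lemma sim_eig: fixes A Ah U :: "real mat"
  assumes A: "A \<in> carrier_mat n n" and Ah: "Ah \<in> carrier_mat n n" and U: "U \<in> carrier_mat n n"
    and UtU: "transpose_mat U * U = 1\<^sub>m n" and eq: "Ah * U = U * A"
  shows "eigenvalue (cmat A) z \<longleftrightarrow> eigenvalue (cmat Ah) z"
proof -
  let ?Ut = "transpose_mat U"
  have Ut: "?Ut \<in> carrier_mat n n" using U by simp
  have UUt: "U * ?Ut = 1\<^sub>m n" by (rule mat_mult_left_right_inverse[OF Ut U UtU])
  have AhU: "Ah = U * A * ?Ut"
  proof -
    have "Ah = Ah * (U * ?Ut)" unfolding UUt using Ah by simp
    also have "\<dots> = (Ah * U) * ?Ut" by (rule assoc_mult_mat[OF Ah U Ut, symmetric])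
    finally show ?thesis unfolding eq .
  qed
  have "similar_mat_wit (cmat Ah) (cmat A) (cmat U) (cmat ?Ut)"
    unfolding similar_mat_wit_def Let_def
  proof (intro conjI)
    show "{cmat Ah, cmat A, cmat U, cmat ?Ut} \<subseteq> carrier_mat (dim_row (cmat Ah)) (dim_row (cmat Ah))"
      using A Ah U by auto
    have "cmat U * cmat ?Ut = cmat (U * ?Ut)" by (rule cmat_mult[OF U Ut, symmetric])
    also have "\<dots> = 1\<^sub>m n" unfolding UUt by (rule of_real_hom.mat_hom_one)
    finally show "cmat U * cmat ?Ut = 1\<^sub>m (dim_row (cmat Ah))" using Ah by simp
    have "cmat ?Ut * cmat U = cmat (?Ut * U)" by (rule cmat_mult[OF Ut U, symmetric])
    also have "\<dots> = 1\<^sub>m n" unfolding UtU by (rule of_real_hom.mat_hom_one)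
    finally show "cmat ?Ut * cmat U = 1\<^sub>m (dim_row (cmat Ah))" using Ah by simp
    show "cmat Ah = cmat U * cmat A * cmat ?Ut"
      using arg_cong[OF AhU, of cmat] cmat_mult[OF mult_carrier_mat[OF U A] Ut] cmat_mult[OF U A] by simp
  qed
  hence "char_poly (cmat Ah) = char_poly (cmat A)" by (intro char_poly_similar, auto simp: similar_mat_def)
  thus ?thesis using eigenvalue_root_char_poly[of "cmat A" n] eigenvalue_root_char_poly[of "cmat Ah" n] A Ah by simp
qed

lemma main_aux: "\<forall>A Ah U l r l' r'. 2*l+r = n \<longrightarrow> 2*l'+r' = n \<longrightarrow> OS A l r \<longrightarrow> OS Ah l' r' \<longrightarrow>
  U \<in> carrier_mat n n \<longrightarrow> transpose_mat U * U = 1\<^sub>m n \<longrightarrow> Ah * U = U * A \<longrightarrow>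
  (\<exists>Us. U = diag_block_mat Us \<and> map dim_row Us = grp A l r \<and>
     (\<forall>i<length Us. real_orthogonal (dim_row (Us!i)) (Us!i)))"
proof (induct n rule: less_induct)
  case (less n)
  show ?case
  proof (intro allI impI)
    fix A Ah U :: "real mat" and l r l' r' :: nat
    assume n: "2*l+r = n" and n': "2*l'+r' = n" and OS: "OS A l r" and OS': "OS Ah l' r'"
      and U: "U \<in> carrier_mat n n" and UtU: "transpose_mat U * U = 1\<^sub>m n" and eq: "Ah * U = U * A"
    show "\<exists>Us. U = diag_block_mat Us \<and> map dim_row Us = grp A l r \<and>
     (\<forall>i<length Us. real_orthogonal (dim_row (Us!i)) (Us!i))"
    proof (cases "n = 0")
      case True
      hence "l = 0" "r = 0" using n by auto
      hence g: "grp A l r = []" unfolding grp_def by simp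
      have "U = diag_block_mat []" using U True by (auto intro!: eq_matI)
      thus ?thesis using g by (intro exI[of _ "[]"], auto)
    next
      case False
      have N: "0 < l + r" using n False by auto
      have N': "0 < l' + r'" using n' False by auto
      define j where "j = jj A l r"
      define j' where "j' = jj Ah l' r'"
      define p where "p = bst l j"
      define p' where "p' = bst l' j'"
      note jf = jj_facts[OF OS N, folded j_def]
      note jf' = jj_facts[OF OS' N', folded j'_def]
      have A: "A \<in> carrier_mat n n" using OS_carrier[OF OS] n by simp
      have Ah: "Ah \<in> carrier_mat n n" using OS_carrier[OF OS'] n' by simp
      note sim = sim_eig[OF A Ah U UtU eq]
      let ?v = "vv A l 0" and ?v' = "vv Ah l' 0"
      have im: "0 \<le> Im ?v" "0 \<le> Im ?v'" using vv[OF OS N] vv[OF OS' N'] by auto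
      have e1: "eigenvalue (cmat A) ?v'" using v0_eig[OF OS' N'] sim by simp
      have e2: "eigenvalue (cmat Ah) ?v" using v0_eig[OF OS N] sim by simp
      have "key ?v \<le> key ?v'" by (rule spec_min[OF OS e1 im(2)])
      moreover have "key ?v' \<le> key ?v" by (rule spec_min[OF OS' e2 im(1)])
      ultimately have vv': "?v' = ?v" using key_inj[OF im] by simp
      have pn: "p \<le> n" unfolding p_def using bst_le_end[OF jf(2)] n by simp
      have pn': "p' \<le> n" unfolding p'_def using bst_le_end[OF jf'(2)] n' by simp
      have zA: "A $$ (i,i') = 0" if "i < n" "i' < p" "p \<le> i" for i i'
        by (rule zero_split[OF OS], use that n p_def in auto)
      have zAh: "Ah $$ (i,i') = 0" if "i < n" "i' < p'" "p' \<le> i" for i i'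
        by (rule zero_split[OF OS'], use that n' p'_def in auto)
      have d1: "\<not> eigenvalue (subm (cmat Ah) p' p' (n-p') (n-p')) e"
        if "eigenvalue (subm (cmat A) 0 0 p p) e" for e
      proof
        assume "eigenvalue (subm (cmat Ah) p' p' (n-p') (n-p')) e"
        hence "e \<notin> {?v', cnj ?v'}" using tail_spec[OF OS' N'] n' unfolding p'_def j'_def by simp
        moreover have "e \<in> {?v, cnj ?v}" using head_spec[OF OS N] that unfolding p_def j_def by simp
        ultimately show False using vv' by simp
      qed
      have d2: "\<not> eigenvalue (subm (cmat A) p p (n-p) (n-p)) e"
        if "eigenvalue (subm (cmat Ah) 0 0 p' p') e" for e
      proof
        assume "eigenvalue (subm (cmat A) p p (n-p) (n-p)) e"
        hence "e \<notin> {?v, cnj ?v}" using tail_spec[OF OS N] n unfolding p_def j_def by simp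
        moreover have "e \<in> {?v', cnj ?v'}" using head_spec[OF OS' N'] that unfolding p'_def j'_def by simp
        ultimately show False using vv' by simp
      qed
      from split_real[OF A Ah U UtU eq pn pn' zA zAh d1 d2]
      have pp: "p' = p" and zU: "\<And>i i'. i < n \<Longrightarrow> i' < n \<Longrightarrow> (i < p) \<noteq> (i' < p) \<Longrightarrow> U $$ (i,i') = 0" by auto
      have zAh2: "Ah $$ (i,i') = 0" if "i < n" "i' < p" "p \<le> i" for i i' using zAh that pp by simp
      note be = block_extract[OF A Ah U UtU eq pn zA zAh2 zU]
      let ?T = "subm A p p (n-p) (n-p)" and ?Th = "subm Ah p p (n-p) (n-p)" and ?U4 = "subm U p p (n-p) (n-p)"
      let ?U1 = "subm U 0 0 p p"
      let ?lt = "l - min j l" and ?rt = "r - (j - min j l)"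
      let ?lt' = "l' - min j' l'" and ?rt' = "r' - (j' - min j' l')"
      have OST: "OS ?T ?lt ?rt" using OS_tail[OF OS jf(2)] n unfolding p_def by simp
      have OST': "OS ?Th ?lt' ?rt'" using OS_tail[OF OS' jf'(2)] n' pp unfolding p'_def by simp
      have dT: "2 * ?lt + ?rt = n - p" using tail_dim[OF jf(2)] n unfolding p_def by simp
      have dT': "2 * ?lt' + ?rt' = n - p" using tail_dim[OF jf'(2)] n' pp unfolding p'_def by simp
      have ppos: "0 < p" unfolding p_def using bst_strict[OF jf(1), of l] by simp
      have lt: "n - p < n" using ppos pn by simp
      from less(1)[OF lt, rule_format, OF dT dT' OST OST' _ be(3) be(4)]
      obtain Us where Us: "?U4 = diag_block_mat Us" "map dim_row Us = grp ?T ?lt ?rt"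
        "\<forall>i<length Us. real_orthogonal (dim_row (Us!i)) (Us!i)" by auto
      have dD: "dim_row (diag_block_mat Us) = n - p" "dim_col (diag_block_mat Us) = n - p"
        using Us(1)[symmetric] by auto
      show ?thesis
      proof (intro exI[of _ "?U1 # Us"] conjI)
        show "U = diag_block_mat (?U1 # Us)"
          using be(1) Us(1) dD by (simp add: Let_def)
        show "map dim_row (?U1 # Us) = grp A l r"
          using Us(2) grp_split[OF OS N] unfolding p_def j_def n[symmetric] by simp
        show "\<forall>i<length (?U1 # Us). real_orthogonal (dim_row ((?U1 # Us) ! i)) ((?U1 # Us) ! i)"
        proof (intro allI impI)
          fix i assume "i < length (?U1 # Us)"
          thus "real_orthogonal (dim_row ((?U1 # Us) ! i)) ((?U1 # Us) ! i)"
            using Us(3) be(2) unfolding real_orthogonal_def by (cases i, auto)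
        qed
      qed
    qed
  qed
qed

lemma blk_eigs_eq: assumes bs: "bs = replicate l 2 @ replicate r 1" and A: "A \<in> carrier_mat (2*l+r) (2*l+r)"
  and k: "k < l + r"
  shows "blk_eigs A bs k = ceigs (cmat A) l k"
proof -
  have "diag_blk A bs k = subm A (bst l k) (bst l k) (bsz l k) (bsz l k)"
    unfolding diag_blk_def subm_def bs_nth[OF bs k] bs_start[OF bs less_imp_le[OF k]] ..
  moreover have "cmat (subm A (bst l k) (bst l k) (bsz l k) (bsz l k)) = subm (cmat A) (bst l k) (bst l k) (bsz l k) (bsz l k)"
    by (rule subm_map, use A bst_Suc_le[OF k] in auto)
  ultimately show ?thesis unfolding blk_eigs_def ceigs_def by simp
qed

lemma to_OS: assumes "ordered_real_schur_form A bs l"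
  shows "bs = replicate l 2 @ replicate (length bs - l) 1 \<and> OS A l (length bs - l) \<and>
    eig_group_sizes A bs = grp A l (length bs - l) \<and> sum_list bs = 2*l + (length bs - l)"
proof -
  define r where "r = length bs - l"
  have rs: "real_schur_form A bs l" using assms unfolding ordered_real_schur_form_def by simp
  have bs: "bs = replicate l 2 @ replicate r 1" using rs unfolding real_schur_form_def r_def by simp
  have lb: "l \<le> length bs" using rs unfolding real_schur_form_def by simp
  have len: "length bs = l + r" using lb unfolding r_def by simp
  have sum: "sum_list bs = 2*l + r" by (rule bs_sum[OF bs])
  have A0: "A \<in> carrier_mat (sum_list bs) (sum_list bs)" using rs unfolding real_schur_form_def by simp
  have A: "A \<in> carrier_mat (2*l+r) (2*l+r)" using A0 unfolding sum .
  note be = blk_eigs_eq[OF bs A]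
  have BT: "BT A l r" unfolding BT_def
  proof (intro conjI allI impI)
    show "A \<in> carrier_mat (2*l+r) (2*l+r)" by fact
    fix i j assume i: "i < 2*l+r" and j: "j < 2*l+r" and lt: "bo l j < bo l i"
    have "blk_of bs j < blk_of bs i" using lt unfolding bs_of[OF bs i] bs_of[OF bs j] .
    thus "A $$ (i,j) = 0" using rs i j sum unfolding real_schur_form_def by auto
  qed
  have OS: "OS A l r" unfolding OS_def
  proof (intro conjI)
    show "BT A l r" by fact
    show "\<forall>k<l. \<forall>z\<in>ceigs (cmat A) l k. Im z \<noteq> 0"
    proof (intro allI impI ballI)
      fix k z assume k: "k < l" and z: "z \<in> ceigs (cmat A) l k"
      have "z \<in> blk_eigs A bs k" using z be[of k] k by simp
      thus "Im z \<noteq> 0" using rs k unfolding real_schur_form_def by auto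
    qed
    show "\<forall>i j. i < j \<and> (j < l \<or> (l \<le> i \<and> j < l + r)) \<longrightarrow>
      (\<forall>z\<in>ceigs (cmat A) l i. \<forall>w\<in>ceigs (cmat A) l j. cmod z \<le> cmod w \<and> (cmod z = cmod w \<longrightarrow> Re w \<le> Re z))"
    proof (intro allI impI)
      fix i j assume ij: "i < j \<and> (j < l \<or> (l \<le> i \<and> j < l + r))"
      have ij2: "i < j \<and> (j < l \<or> (l \<le> i \<and> j < length bs))" using ij len by simp
      have jl: "j < l + r" "i < l + r" using ij lb by auto
      have "\<forall>z\<in>blk_eigs A bs i. \<forall>w\<in>blk_eigs A bs j. cmod z \<le> cmod w \<and> (cmod z = cmod w \<longrightarrow> Re w \<le> Re z)"
        using assms ij2 unfolding ordered_real_schur_form_def by blast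
      thus "\<forall>z\<in>ceigs (cmat A) l i. \<forall>w\<in>ceigs (cmat A) l j. cmod z \<le> cmod w \<and> (cmod z = cmod w \<longrightarrow> Re w \<le> Re z)"
        unfolding be[OF jl(1)] be[OF jl(2)] .
    qed
  qed
  have "eig_group_sizes A bs = grp A l r"
    unfolding eig_group_sizes_def grp_def len
    by (rule arg_cong[where f = merge_runs], rule map_cong, simp, simp add: be bs_nth[OF bs])
  thus ?thesis using bs OS sum unfolding r_def by simp
qed

theorem theorem9p2:
  fixes A Ahat U :: "real mat" and bs bs' :: "nat list" and l l' n :: nat
  assumes "sum_list bs = n" and "sum_list bs' = n"
    and "ordered_real_schur_form A bs l"
    and "ordered_real_schur_form Ahat bs' l'"
    and "real_orthogonal n U"
    and "Ahat * U = U * A"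
  shows "\<exists>Us. U = diag_block_mat Us \<and>
           map dim_row Us = eig_group_sizes A bs \<and>
           (\<forall>i < length Us. real_orthogonal (dim_row (Us ! i)) (Us ! i))"
proof -
  note o1 = to_OS[OF assms(3)] and o2 = to_OS[OF assms(4)]
  have U: "U \<in> carrier_mat n n" "transpose_mat U * U = 1\<^sub>m n" using assms(5) unfolding real_orthogonal_def by auto
  have n1: "2*l + (length bs - l) = n" using o1 assms(1) by simp
  have n2: "2*l' + (length bs' - l') = n" using o2 assms(2) by simp
  from main_aux[rule_format, OF n1 n2 _ _ U assms(6)] o1 o2
  show ?thesis by auto
qed

end
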